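(* For every $n\ge1$, the smallest size $C(n)$ of a banded asymmetric covering $\mathcal{D}(n,1)$ is $$C(n)=\sum_{i=0}^{\lfloor n/2\rfloor}C(n+1,\,n+1-2i,\,n-2i).$$
   Context: An asymmetric covering $\mathcal{D}(n,1)$ is a set $\mathcal{D}\subseteq\mathbb{F}_2^n$ such that every $v\in\mathbb{F}_2^n$ either lies in $\mathcal{D}$ or is covered by (has support contained in the support of) some $u\in\mathcal{D}$ with $\mathrm{wt}(u)=\mathrm{wt}(v)+1$. It is banded if every $v$ of odd co-weight $n-\mathrm{wt}(v)$ is covered by some $u\in\mathcal{D}$ with $\mathrm{wt}(u)=\mathrm{wt}(v)+1$. $C(v,k,t)$ denotes the smallest size of a covering design $\mathcal{C}(v,k,t)$, i.e. a collection of $k$-subsets of a $v$-set such that every $t$-subset is contained in at least one of them. *)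

theory Defs
  imports Main
begin

text \<open>Vectors of F_2^n are represented by their supports, i.e. subsets of {0..<n};
  the weight of a vector is the cardinality of its support.\<close>

definition covers :: "nat set \<Rightarrow> nat set \<Rightarrow> bool" where
  "covers u v \<longleftrightarrow> v \<subseteq> u \<and> card u = card v + 1"

definition asym_covering :: "nat \<Rightarrow> nat set set \<Rightarrow> bool" where
  "asym_covering n D \<longleftrightarrow> D \<subseteq> Pow {0..<n} \<and>
     (\<forall>v \<in> Pow {0..<n}. v \<in> D \<or> (\<exists>u \<in> D. covers u v))"

definition banded :: "nat \<Rightarrow> nat set set \<Rightarrow> bool" where
  "banded n D \<longleftrightarrow>
     (\<forall>v \<in> Pow {0..<n}. odd (n - card v) \<longrightarrow> (\<exists>u \<in> D. covers u v))"

definition min_banded_covering :: "nat \<Rightarrow> nat" where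
  "min_banded_covering n =
     (LEAST m. \<exists>D. asym_covering n D \<and> banded n D \<and> card D = m)"

definition covering_number :: "nat \<Rightarrow> nat \<Rightarrow> nat \<Rightarrow> nat" where
  "covering_number v k t =
     (LEAST m. \<exists>B. B \<subseteq> {S. S \<subseteq> {0..<v} \<and> card S = k} \<and>
        (\<forall>T. T \<subseteq> {0..<v} \<and> card T = t \<longrightarrow> (\<exists>S \<in> B. T \<subseteq> S)) \<and>
        card B = m)"

end

theory Submission
  imports Defs
begin

definition phi :: "nat \<Rightarrow> nat set \<Rightarrow> nat set" where
  "phi n u = (if even (n - card u) then insert n u else u)"

definition cov :: "nat \<Rightarrow> nat \<Rightarrow> nat \<Rightarrow> nat set set \<Rightarrow> bool" where
  "cov v k t B \<longleftrightarrow> B \<subseteq> {S. S \<subseteq> {0..<v} \<and> card S = k} \<and>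
        (\<forall>T. T \<subseteq> {0..<v} \<and> card T = t \<longrightarrow> (\<exists>S \<in> B. T \<subseteq> S))"

definition goodF :: "nat \<Rightarrow> nat set set \<Rightarrow> bool" where
  "goodF n F \<longleftrightarrow> (\<forall>T. T \<subseteq> {0..<Suc n} \<and> odd (Suc n - card T) \<longrightarrow>
      (\<exists>S\<in>F. T \<subseteq> S \<and> card S = card T + 1))"

lemma cn_eq: "covering_number v k t = (LEAST m. \<exists>B. cov v k t B \<and> card B = m)"
  unfolding covering_number_def cov_def by simp

lemma sub_card_le: "u \<subseteq> {0..<n} \<Longrightarrow> card u \<le> n"
  by (metis card_atLeastLessThan card_mono finite_atLeastLessThan diff_zero)

lemma exists_out: "T \<subseteq> {0..<v} \<Longrightarrow> card T < v \<Longrightarrow> \<exists>x\<in>{0..<v}. x \<notin> T"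
proof (rule ccontr)
  assume "T \<subseteq> {0..<v}" "card T < v" "\<not> (\<exists>x\<in>{0..<v}. x \<notin> T)"
  then have "T = {0..<v}" by auto
  then show False using \<open>card T < v\<close> by simp
qed

lemma phi_props:
  assumes "u \<subseteq> {0..<n}"
  shows "finite u" "n \<notin> u"
    "card (phi n u) = (if even (n - card u) then card u + 1 else card u)"
    "n \<in> phi n u \<longleftrightarrow> even (n - card u)"
    "phi n u \<subseteq> {0..<Suc n}"
proof -
  show f: "finite u" using assms finite_subset by blast
  show nu: "n \<notin> u" using assms by auto
  show "card (phi n u) = (if even (n - card u) then card u + 1 else card u)"
    using f nu by (simp add: phi_def)
  show "n \<in> phi n u \<longleftrightarrow> even (n - card u)" using nu by (simp add: phi_def)
  show "phi n u \<subseteq> {0..<Suc n}" using assms by (auto simp: phi_def)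
qed

lemma phi_inj: "inj_on (phi n) (Pow {0..<n})"
proof (rule inj_onI)
  fix u v assume u: "u \<in> Pow {0..<n}" and v: "v \<in> Pow {0..<n}" and e: "phi n u = phi n v"
  have pu: "u \<subseteq> {0..<n}" "v \<subseteq> {0..<n}" using u v by auto
  have nu: "n \<notin> u" "n \<notin> v" using pu by auto
  have ru: "u = phi n u - {n}" using nu(1) by (auto simp: phi_def)
  have rv: "v = phi n v - {n}" using nu(2) by (auto simp: phi_def)
  show "u = v" using ru rv e by simp
qed

lemma phi_surj:
  assumes "S \<subseteq> {0..<Suc n}" "even (Suc n - card S)"
  shows "\<exists>u \<in> Pow {0..<n}. phi n u = S"
proof (cases "n \<in> S")
  case True
  define u where "u = S - {n}"
  have fS: "finite S" using assms(1) finite_subset by blast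
  have u: "u \<subseteq> {0..<n}" using assms(1) u_def by auto
  have cu: "card u = card S - 1" using True fS u_def by simp
  have "card S \<ge> 1" using True fS by (metis One_nat_def Suc_leI card_gt_0_iff empty_iff)
  moreover have "card S \<le> Suc n" using sub_card_le[OF assms(1)] .
  ultimately have "n - card u = Suc n - card S" using cu by simp
  then have "even (n - card u)" using assms(2) by simp
  then have "phi n u = S" using True u_def by (auto simp: phi_def)
  then show ?thesis using u by blast
next
  case False
  have u: "S \<subseteq> {0..<n}" using assms(1) False by (auto simp: subset_iff less_Suc_eq)
  have "card S \<le> n" using sub_card_le[OF u] .
  then have "odd (n - card S)" using assms(2) by (simp add: Suc_diff_le)
  then have "phi n S = S" by (simp add: phi_def)
  then show ?thesis using u by blast
qed

lemma good_fwd: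
  assumes D: "D \<subseteq> Pow {0..<n}" and a: "asym_covering n D" and b: "banded n D"
  shows "goodF n (phi n ` D)"
  unfolding goodF_def
proof (intro allI impI)
  fix T assume "T \<subseteq> {0..<Suc n} \<and> odd (Suc n - card T)"
  then have T: "T \<subseteq> {0..<Suc n}" and o: "odd (Suc n - card T)" by auto
  have fT: "finite T" using T finite_subset by blast
  have cT: "card T \<le> n" using o sub_card_le[OF T]
    by (metis Suc_diff_le diff_is_0_eq even_zero le_SucE)
  show "\<exists>S\<in>phi n ` D. T \<subseteq> S \<and> card S = card T + 1"
  proof (cases "n \<in> T")
    case True
    define w where "w = T - {n}"
    have w: "w \<subseteq> {0..<n}" using T w_def by auto
    have cw: "card w = card T - 1" using True fT w_def by simp
    have "card T \<ge> 1" using True fT by (metis One_nat_def Suc_leI card_gt_0_iff empty_iff)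
    then have "n - card w = Suc n - card T" using cw cT by simp
    then have "odd (n - card w)" using o by simp
    then obtain u where uD: "u \<in> D" and cv: "covers u w" using b w unfolding banded_def by auto
    have wu: "w \<subseteq> u" and cu: "card u = card w + 1" using cv unfolding covers_def by auto
    have uu: "u \<subseteq> {0..<n}" using uD D by auto
    have cu2: "card u = card T" using cu cw \<open>card T \<ge> 1\<close> by simp
    have "n - card u = Suc n - card T - 1" using cu2 cT by simp
    then have ev: "even (n - card u)" using o cT by (simp add: Suc_diff_le)
    then have "phi n u = insert n u" by (simp add: phi_def)
    moreover have "T \<subseteq> insert n u" using wu w_def by auto
    moreover have "card (phi n u) = card T + 1" using phi_props(3)[OF uu] ev cu2 by simp
    ultimately show ?thesis using uD by (intro bexI[of _ "phi n u"]) auto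
  next
    case False
    have v: "T \<subseteq> {0..<n}" using T False by (auto simp: subset_iff less_Suc_eq)
    have ev: "even (n - card T)" using o cT by (simp add: Suc_diff_le)
    have "T \<in> D \<or> (\<exists>u\<in>D. covers u T)" using a v unfolding asym_covering_def by auto
    then show ?thesis
    proof
      assume "T \<in> D"
      moreover have "card (phi n T) = card T + 1" using phi_props(3)[OF v] ev by simp
      moreover have "T \<subseteq> phi n T" by (auto simp: phi_def)
      ultimately show ?thesis by blast
    next
      assume "\<exists>u\<in>D. covers u T"
      then obtain u where uD: "u \<in> D" and tu: "T \<subseteq> u" and cu: "card u = card T + 1"
        unfolding covers_def by auto
      have uu: "u \<subseteq> {0..<n}" using uD D by auto
      have "card u \<le> n" using sub_card_le[OF uu] .
      then have "odd (n - card u)" using ev cu by (metis Suc_diff_Suc Suc_eq_plus1 Suc_le_lessD even_Suc)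
      then have "phi n u = u" by (simp add: phi_def)
      then show ?thesis using uD tu cu by (metis image_eqI)
    qed
  qed
qed

lemma good_bwd:
  assumes D: "D \<subseteq> Pow {0..<n}" and g: "goodF n (phi n ` D)"
  shows "asym_covering n D \<and> banded n D"
proof -
  have bd: "banded n D" unfolding banded_def
  proof (intro ballI impI)
    fix v assume "v \<in> Pow {0..<n}" and o: "odd (n - card v)"
    then have v: "v \<subseteq> {0..<n}" by auto
    have fv: "finite v" "n \<notin> v" using phi_props[OF v] by auto
    have cT: "card (insert n v) = card v + 1" using fv by simp
    have "insert n v \<subseteq> {0..<Suc n}" using v by auto
    moreover have "odd (Suc n - card (insert n v))" using cT o by simp
    ultimately have "\<exists>S\<in>phi n ` D. insert n v \<subseteq> S \<and> card S = card (insert n v) + 1"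
      using g unfolding goodF_def by blast
    then obtain u where uD: "u \<in> D" and s: "insert n v \<subseteq> phi n u"
      and c0: "card (phi n u) = card (insert n v) + 1" by blast
    have c: "card (phi n u) = card v + 2" using c0 cT by simp
    have uu: "u \<subseteq> {0..<n}" using uD D by auto
    have "n \<in> phi n u" using s by auto
    then have ev: "even (n - card u)" using phi_props(4)[OF uu] by simp
    then have "phi n u = insert n u" by (simp add: phi_def)
    then have "v \<subseteq> u" using s fv(2) by auto
    moreover have "card u = card v + 1" using c phi_props(3)[OF uu] ev by simp
    ultimately show "\<exists>u\<in>D. covers u v" using uD unfolding covers_def by auto
  qed
  have "asym_covering n D" unfolding asym_covering_def
  proof (intro conjI ballI)
    show "D \<subseteq> Pow {0..<n}" by fact
    fix v assume vP: "v \<in> Pow {0..<n}"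
    then have v: "v \<subseteq> {0..<n}" by auto
    show "v \<in> D \<or> (\<exists>u\<in>D. covers u v)"
    proof (cases "odd (n - card v)")
      case True then show ?thesis using bd vP unfolding banded_def by auto
    next
      case False
      have cv: "card v \<le> n" using sub_card_le[OF v] .
      have "v \<subseteq> {0..<Suc n}" using v by auto
      moreover have "odd (Suc n - card v)" using False cv by (simp add: Suc_diff_le)
      ultimately have "\<exists>S\<in>phi n ` D. v \<subseteq> S \<and> card S = card v + 1"
        using g unfolding goodF_def by blast
      then obtain u where uD: "u \<in> D" and s: "v \<subseteq> phi n u"
        and c: "card (phi n u) = card v + 1" by blast
      have uu: "u \<subseteq> {0..<n}" using uD D by auto
      show ?thesis
      proof (cases "even (n - card u)")
        case True
        then have "phi n u = insert n u" by (simp add: phi_def)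
        then have "v \<subseteq> u" using s phi_props(2)[OF v] by auto
        moreover have "card u = card v" using c phi_props(3)[OF uu] True by simp
        ultimately have "u = v" using phi_props(1)[OF uu] by (metis card_subset_eq)
        then show ?thesis using uD by auto
      next
        case False
        then have "phi n u = u" by (simp add: phi_def)
        then show ?thesis using s c uD unfolding covers_def by auto
      qed
    qed
  qed
  then show ?thesis using bd by auto
qed

theorem corollary2:
  fixes n :: nat
  assumes "n \<ge> 1"
  shows "min_banded_covering n =
    (\<Sum>i = 0..n div 2. covering_number (n + 1) (n + 1 - 2 * i) (n - 2 * i))"
proof -
  define K where "K = {0..n div 2}"
  define c where "c i = covering_number (n + 1) (n + 1 - 2 * i) (n - 2 * i)" for i
  have K2: "i \<in> K \<Longrightarrow> 2 * i \<le> n" for i unfolding K_def by auto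
  have ex: "\<exists>B. cov (n+1) (n+1-2*i) (n-2*i) B \<and> card B = c i" if "i \<in> K" for i
  proof -
    let ?B = "{S. S \<subseteq> {0..<n+1} \<and> card S = n+1-2*i}"
    have "cov (n+1) (n+1-2*i) (n-2*i) ?B" unfolding cov_def
    proof (intro conjI allI impI)
      fix T assume h: "T \<subseteq> {0..<n + 1} \<and> card T = n - 2 * i"
      then have "card T < n + 1" by simp
      then obtain x where x: "x \<in> {0..<n+1}" "x \<notin> T" using exists_out h by blast
      have fT: "finite T" using h finite_subset by blast
      have "insert x T \<in> ?B" using x h fT K2[OF that] by auto
      then show "\<exists>S\<in>?B. T \<subseteq> S" by blast
    qed simp
    then have "\<exists>m. \<exists>B. cov (n+1) (n+1-2*i) (n-2*i) B \<and> card B = m" by blast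
    from LeastI_ex[OF this] show ?thesis unfolding c_def cn_eq by simp
  qed
  then have "\<forall>i\<in>K. \<exists>B. cov (n+1) (n+1-2*i) (n-2*i) B \<and> card B = c i" by blast
  from bchoice[OF this] obtain Bf where
    Bf0: "\<forall>i\<in>K. cov (n+1) (n+1-2*i) (n-2*i) (Bf i) \<and> card (Bf i) = c i" by blast
  have Bf: "\<And>i. i \<in> K \<Longrightarrow> cov (n+1) (n+1-2*i) (n-2*i) (Bf i) \<and> card (Bf i) = c i"
    using Bf0 by blast
  have finB: "finite (Bf i)" if "i \<in> K" for i
  proof -
    have "Bf i \<subseteq> Pow {0..<n+1}" using Bf[OF that] unfolding cov_def by auto
    then show ?thesis by (meson finite_Pow_iff finite_atLeastLessThan finite_subset)
  qed
  define F where "F = (\<Union>i\<in>K. Bf i)"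
  have cardF: "card F = (\<Sum>i\<in>K. c i)"
    unfolding F_def
  proof (subst card_UN_disjoint)
    show "finite K" unfolding K_def by simp
    show "\<forall>i\<in>K. finite (Bf i)" using finB by auto
    show "\<forall>i\<in>K. \<forall>j\<in>K. i \<noteq> j \<longrightarrow> Bf i \<inter> Bf j = {}"
    proof (intro ballI impI)
      fix i j assume i: "i \<in> K" and j: "j \<in> K" and ij: "i \<noteq> j"
      have "n+1-2*i \<noteq> n+1-2*j" using K2[OF i] K2[OF j] ij by simp
      moreover have si: "\<forall>S\<in>Bf i. card S = n+1-2*i" using Bf[OF i] unfolding cov_def by auto
      moreover have sj: "\<forall>S\<in>Bf j. card S = n+1-2*j" using Bf[OF j] unfolding cov_def by auto
      ultimately show "Bf i \<inter> Bf j = {}" by (metis disjoint_iff)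
    qed
    show "(\<Sum>i\<in>K. card (Bf i)) = sum c K" using Bf by simp
  qed
  have FE: "S \<in> F \<Longrightarrow> S \<subseteq> {0..<Suc n} \<and> even (Suc n - card S)" for S
  proof -
    assume "S \<in> F"
    then obtain i where i: "i \<in> K" "S \<in> Bf i" unfolding F_def by auto
    then have "S \<subseteq> {0..<Suc n}" "card S = n+1-2*i" using Bf[OF i(1)] unfolding cov_def by auto
    then show ?thesis using K2[OF i(1)] by simp
  qed
  define D where "D = {u \<in> Pow {0..<n}. phi n u \<in> F}"
  have imD: "phi n ` D = F"
  proof
    show "phi n ` D \<subseteq> F" unfolding D_def by auto
    show "F \<subseteq> phi n ` D"
    proof
      fix S assume S: "S \<in> F"
      have "S \<subseteq> {0..<Suc n}" "even (Suc n - card S)" using FE[OF S] by auto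
      from phi_surj[OF this] obtain u where "u \<in> Pow {0..<n}" "phi n u = S" by blast
      then show "S \<in> phi n ` D" using S unfolding D_def by auto
    qed
  qed
  have DP: "D \<subseteq> Pow {0..<n}" unfolding D_def by auto
  have cardD: "card D = card F"
    using card_image[OF inj_on_subset[OF phi_inj DP]] imD by simp
  have gF: "goodF n F" unfolding goodF_def
  proof (intro allI impI)
    fix T assume "T \<subseteq> {0..<Suc n} \<and> odd (Suc n - card T)"
    then have T: "T \<subseteq> {0..<Suc n}" and o: "odd (Suc n - card T)" by auto
    have cT: "card T \<le> n" using o sub_card_le[OF T]
      by (metis Suc_diff_le diff_is_0_eq even_zero le_SucE)
    define i where "i = (n - card T) div 2"
    have ev: "even (n - card T)" using o cT by (simp add: Suc_diff_le)
    have ci: "card T = n - 2 * i" using ev cT unfolding i_def by auto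
    have iK: "i \<in> K" unfolding K_def i_def by auto
    have cv: "cov (n+1) (n+1-2*i) (n-2*i) (Bf i)" using Bf[OF iK] by blast
    have T1: "T \<subseteq> {0..<n+1}" using T by simp
    obtain S where S1: "S \<in> Bf i" and S2: "T \<subseteq> S"
      using cv T1 ci unfolding cov_def by blast
    have S3: "card S = n+1-2*i" using cv S1 unfolding cov_def by blast
    have S4: "n+1-2*i = card T + 1" using ci K2[OF iK] by simp
    have S5: "S \<in> F" unfolding F_def using iK S1 by (rule UN_I)
    show "\<exists>S\<in>F. T \<subseteq> S \<and> card S = card T + 1"
      using S5 S2 S3 S4 by metis
  qed
  have goodD: "asym_covering n D \<and> banded n D" using good_bwd[OF DP] gF imD by simp
  have exD: "\<exists>D. asym_covering n D \<and> banded n D \<and> card D = (\<Sum>i\<in>K. c i)"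
    using goodD cardD cardF by (intro exI[of _ D]) simp
  have le1: "min_banded_covering n \<le> (\<Sum>i\<in>K. c i)"
    unfolding min_banded_covering_def using exD by (rule Least_le)
  have "\<exists>m D. asym_covering n D \<and> banded n D \<and> card D = m" using goodD by blast
  from LeastI_ex[OF this] obtain D0 where D0: "asym_covering n D0" "banded n D0"
    "card D0 = min_banded_covering n" unfolding min_banded_covering_def by blast
  have D0P: "D0 \<subseteq> Pow {0..<n}" using D0(1) unfolding asym_covering_def by auto
  define F0 where "F0 = phi n ` D0"
  have gF0: "goodF n F0" using good_fwd[OF D0P D0(1,2)] F0_def by simp
  have cF0: "card F0 = card D0" unfolding F0_def
    using card_image[OF inj_on_subset[OF phi_inj D0P]] by simp
  have F0P: "F0 \<subseteq> Pow {0..<Suc n}" unfolding F0_def using D0P phi_props(5) by blast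
  have finF0: "finite F0" using F0P by (meson finite_Pow_iff finite_atLeastLessThan finite_subset)
  define B where "B i = {S \<in> F0. card S = n + 1 - 2 * i}" for i
  have ci: "c i \<le> card (B i)" if iK: "i \<in> K" for i
  proof -
    have "cov (n+1) (n+1-2*i) (n-2*i) (B i)" unfolding cov_def
    proof (intro conjI allI impI)
      show "B i \<subseteq> {S. S \<subseteq> {0..<n + 1} \<and> card S = n + 1 - 2 * i}"
        unfolding B_def using F0P by auto
      fix T assume h: "T \<subseteq> {0..<n + 1} \<and> card T = n - 2 * i"
      have "odd (Suc n - card T)" using h K2[OF iK]
        by (simp add: Suc_diff_le)
      moreover have T1: "T \<subseteq> {0..<Suc n}" using h by simp
      ultimately have "\<exists>S\<in>F0. T \<subseteq> S \<and> card S = card T + 1"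
        using gF0 unfolding goodF_def by blast
      then obtain S where S1: "S \<in> F0" and S2: "T \<subseteq> S" and S3: "card S = card T + 1"
        by blast
      have "card S = n + 1 - 2 * i" using S3 h K2[OF iK] by simp
      then have "S \<in> B i" unfolding B_def using S1 by simp
      then show "\<exists>S\<in>B i. T \<subseteq> S" using S2 by blast
    qed
    then show ?thesis unfolding c_def cn_eq by (intro Least_le) blast
  qed
  have "(\<Sum>i\<in>K. c i) \<le> (\<Sum>i\<in>K. card (B i))" using ci by (rule sum_mono)
  also have "\<dots> = card (\<Union>i\<in>K. B i)"
  proof (rule card_UN_disjoint[symmetric])
    show "finite K" unfolding K_def by simp
    show "\<forall>i\<in>K. finite (B i)" unfolding B_def using finF0 by auto
    show "\<forall>i\<in>K. \<forall>j\<in>K. i \<noteq> j \<longrightarrow> B i \<inter> B j = {}"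
    proof (intro ballI impI)
      fix i j assume i: "i \<in> K" and j: "j \<in> K" and ij: "i \<noteq> j"
      have ne: "n+1-2*i \<noteq> n+1-2*j" using K2[OF i] K2[OF j] ij by simp
      { fix S assume "S \<in> B i" "S \<in> B j"
        then have "card S = n+1-2*i" "card S = n+1-2*j" unfolding B_def by simp_all
        then have False using ne by simp }
      then show "B i \<inter> B j = {}" by blast
    qed
  qed
  also have "\<dots> \<le> card F0" by (rule card_mono[OF finF0]) (auto simp: B_def)
  finally have le2: "(\<Sum>i\<in>K. c i) \<le> min_banded_covering n" using cF0 D0(3) by simp
  have "min_banded_covering n = (\<Sum>i\<in>K. c i)" using le1 le2 by (rule antisym)
  then show ?thesis unfolding K_def c_def .
qed

end
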